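(* Let $k\geq 1$. (i) Let $q$ be a prime power and $E\subset\mathbb{F}_q^2$. Then $E^{k+1}$ contains $\lesssim q^k|E|$ bad tuples. In particular, if $|E|\gtrsim q^{1+\varepsilon}$ for some constant $\varepsilon>0$, the number of bad tuples in $E^{k+1}$ is $o(|E|^{k+1})$. (ii) Let $p$ be a prime, $\ell\geq 1$, $R=\mathbb{Z}/p^\ell\mathbb{Z}$. The number of bad tuples in $(R^2)^{k+1}$ is $\lesssim p^{(2\ell-1)(k+1)+1}$. In particular, if $E\subset R^2$ satisfies $|E|\gtrsim p^{2\ell-1+\frac{1}{k+1}+\varepsilon}$ for some constant $\varepsilon>0$, then the number of bad tuples in $E^{k+1}$ is $o(|E|^{k+1})$.
   Context: For a commutative ring $R$ and $x=(x_1,x_2),y=(y_1,y_2)\in R^2$, write $y^\perp=(y_2,-y_1)$, so $x\cdot y^\perp=x_1y_2-x_2y_1$. A tuple (configuration) $x=(x^1,\dots,x^{k+1})\in(R^2)^{k+1}$ is good if there exist indices $i,j$ with $x^i\cdot x^{j\perp}$ a unit of $R$, and bad otherwise. $X\lesssim Y$ means $X\leq CY$ with $C$ independent of $q$ (resp. $p,\ell$) and $E$; $o(Y)$ denotes a quantity whose ratio to $Y$ tends to $0$ as the ring size tends to infinity. *)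

theory Defs
  imports "HOL-Algebra.Algebra" "HOL-Number_Theory.Residues" "HOL-Library.FuncSet"
begin

definition perp_dot :: "('a, 'b) ring_scheme \<Rightarrow> 'a \<times> 'a \<Rightarrow> 'a \<times> 'a \<Rightarrow> 'a" where
  "perp_dot R x y = (fst x \<otimes>\<^bsub>R\<^esub> snd y) \<ominus>\<^bsub>R\<^esub> (snd x \<otimes>\<^bsub>R\<^esub> fst y)"

definition good_config :: "('a, 'b) ring_scheme \<Rightarrow> nat \<Rightarrow> (nat \<Rightarrow> 'a \<times> 'a) \<Rightarrow> bool" where
  "good_config R k x \<longleftrightarrow> (\<exists>i\<le>k. \<exists>j\<le>k. perp_dot R (x i) (x j) \<in> Units R)"

definition bad_tuples :: "('a, 'b) ring_scheme \<Rightarrow> nat \<Rightarrow> ('a \<times> 'a) set \<Rightarrow> (nat \<Rightarrow> 'a \<times> 'a) set" where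
  "bad_tuples R k E = {x \<in> {..k} \<rightarrow>\<^sub>E E. \<not> good_config R k x}"

end

theory Submission
  imports Defs
begin

definition relA :: "('a \<Rightarrow> 'a \<Rightarrow> bool) \<Rightarrow> 'a set \<Rightarrow> nat \<Rightarrow> (nat \<Rightarrow> 'a) set" where
  "relA rel E n = {x \<in> {..<n} \<rightarrow>\<^sub>E E. \<forall>i<n. \<forall>j<n. rel (x i) (x j)}"

lemma relA_finite: "finite E \<Longrightarrow> finite (relA rel E n)"
  unfolding relA_def by (rule finite_subset[OF _ finite_PiE[of "{..<n}" "\<lambda>_. E"]]) auto

lemma relA_sub:
  "relA rel E (Suc n) \<subseteq> (\<lambda>(y,a). y(n:=a)) ` (relA rel E n \<times> (E \<inter> Z)) \<union>
     (\<Union>a\<in>E-Z. (\<lambda>y. y(n:=a)) ` ({..<n} \<rightarrow>\<^sub>E {b\<in>E. rel a b}))"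
proof
  fix x assume x: "x \<in> relA rel E (Suc n)"
  define y where "y = x(n := undefined)"
  have xy: "x = y(n := x n)" by (auto simp: y_def)
  have xn: "x n \<in> E" using x by (auto simp: relA_def)
  have xe: "\<And>i. i > n \<Longrightarrow> x i = undefined" using x by (auto simp: relA_def PiE_def extensional_def)
  show "x \<in> (\<lambda>(y,a). y(n:=a)) ` (relA rel E n \<times> (E \<inter> Z)) \<union>
     (\<Union>a\<in>E-Z. (\<lambda>y. y(n:=a)) ` ({..<n} \<rightarrow>\<^sub>E {b\<in>E. rel a b}))"
  proof (cases "x n \<in> Z")
    case True
    have "y \<in> relA rel E n" using x xe unfolding relA_def y_def
      by (auto simp: PiE_def extensional_def Pi_def)
    then have "(y, x n) \<in> relA rel E n \<times> (E \<inter> Z)" using True xn by auto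
    then show ?thesis using xy by (intro UnI1) (auto intro!: image_eqI[where x="(y, x n)"])
  next
    case False
    have "y \<in> {..<n} \<rightarrow>\<^sub>E {b\<in>E. rel (x n) b}" using x xe unfolding relA_def y_def
      by (auto simp: PiE_def extensional_def Pi_def)
    then show ?thesis using xy False xn by (intro UnI2) (auto intro!: image_eqI[where x=y])
  qed
qed

lemma relA_card_step:
  assumes fin: "finite E"
    and L: "\<And>a. a \<in> E \<Longrightarrow> a \<notin> Z \<Longrightarrow> card {b\<in>E. rel a b} \<le> B"
    and Zc: "card (E \<inter> Z) \<le> B"
  shows "card (relA rel E (Suc n)) \<le> card (relA rel E n) * B + card E * B ^ n"
proof -
  let ?U1 = "(\<lambda>(y,a). y(n:=a)) ` (relA rel E n \<times> (E \<inter> Z))"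
  let ?U2 = "(\<Union>a\<in>E-Z. (\<lambda>y. y(n:=a)) ` ({..<n} \<rightarrow>\<^sub>E {b\<in>E. rel a b}))"
  have f1: "finite ?U1" using fin relA_finite[OF fin] by auto
  have f2: "finite ?U2" using fin by (auto intro!: finite_PiE)
  have "card (relA rel E (Suc n)) \<le> card (?U1 \<union> ?U2)"
    by (rule card_mono[OF _ relA_sub]) (use f1 f2 in auto)
  also have "\<dots> \<le> card ?U1 + card ?U2" by (rule card_Un_le)
  also have "card ?U1 \<le> card (relA rel E n) * B"
  proof -
    have "card ?U1 \<le> card (relA rel E n \<times> (E \<inter> Z))" by (rule card_image_le) (use fin relA_finite in auto)
    also have "\<dots> = card (relA rel E n) * card (E \<inter> Z)" by (simp add: card_cartesian_product)
    also have "\<dots> \<le> card (relA rel E n) * B" using Zc by simp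
    finally show ?thesis .
  qed
  also have "card ?U2 \<le> card E * B ^ n"
  proof -
    have "card ?U2 \<le> (\<Sum>a\<in>E-Z. card ((\<lambda>y. y(n:=a)) ` ({..<n} \<rightarrow>\<^sub>E {b\<in>E. rel a b})))"
      by (rule card_UN_le) (use fin in auto)
    also have "\<dots> \<le> (\<Sum>a\<in>E-Z. B ^ n)"
    proof (rule sum_mono)
      fix a assume a: "a \<in> E - Z"
      have "card ((\<lambda>y. y(n:=a)) ` ({..<n} \<rightarrow>\<^sub>E {b\<in>E. rel a b})) \<le> card ({..<n} \<rightarrow>\<^sub>E {b\<in>E. rel a b})"
        by (rule card_image_le) (use fin in \<open>auto intro!: finite_PiE\<close>)
      also have "\<dots> = card {b\<in>E. rel a b} ^ n" by (simp add: card_PiE)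
      also have "\<dots> \<le> B ^ n" using L a by (auto intro: power_mono)
      finally show "card ((\<lambda>y. y(n:=a)) ` ({..<n} \<rightarrow>\<^sub>E {b\<in>E. rel a b})) \<le> B ^ n" .
    qed
    also have "\<dots> = card (E - Z) * B ^ n" by simp
    also have "\<dots> \<le> card E * B ^ n" using fin by (simp add: card_mono)
    finally show ?thesis .
  qed
  finally show ?thesis by simp
qed

lemma relA_card:
  assumes fin: "finite E"
    and L: "\<And>a. a \<in> E \<Longrightarrow> a \<notin> Z \<Longrightarrow> card {b\<in>E. rel a b} \<le> B"
    and Zc: "card (E \<inter> Z) \<le> B"
  shows "card (relA rel E (Suc n)) \<le> Suc n * card E * B ^ n"
proof (induction n)
  case 0
  have "card (relA rel E (Suc 0)) \<le> card ({..<Suc 0} \<rightarrow>\<^sub>E E)"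
    by (rule card_mono) (use fin in \<open>auto simp: relA_def intro!: finite_PiE\<close>)
  then show ?case by (simp add: card_PiE)
next
  case (Suc n)
  have "card (relA rel E (Suc (Suc n))) \<le> card (relA rel E (Suc n)) * B + card E * B ^ Suc n"
    by (rule relA_card_step[OF fin L Zc])
  also have "\<dots> \<le> Suc n * card E * B ^ n * B + card E * B ^ Suc n"
    using Suc by (simp add: mult_right_mono)
  also have "\<dots> = Suc (Suc n) * card E * B ^ Suc n" by (simp add: algebra_simps)
  finally show ?case .
qed

lemma bad_eq_relA: "bad_tuples R k E = relA (\<lambda>a b. perp_dot R a b \<notin> Units R) E (Suc k)"
  unfolding bad_tuples_def relA_def good_config_def
  by (simp add: lessThan_Suc_atMost less_Suc_eq_le)

lemma (in ring) minus_zero_eq: "x \<in> carrier R \<Longrightarrow> y \<in> carrier R \<Longrightarrow> x \<ominus> y = \<zero> \<Longrightarrow> x = y"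
proof -
  assume xy: "x \<in> carrier R" "y \<in> carrier R" "x \<ominus> y = \<zero>"
  have "x = (x \<ominus> y) \<oplus> y" using xy(1,2) by algebra
  then show ?thesis using xy by simp
qed

lemma field_line_card:
  fixes F (structure)
  assumes fld: "field F" and fin: "finite (carrier F)"
    and E: "E \<subseteq> carrier F \<times> carrier F" and a: "a \<in> carrier F \<times> carrier F" "a \<noteq> (\<zero>, \<zero>)"
  shows "card {b\<in>E. perp_dot F a b \<notin> Units F} \<le> card (carrier F)"
proof -
  interpret field F by (rule fld)
  obtain a1 a2 where aa: "a = (a1, a2)" by (cases a)
  have a12: "a1 \<in> carrier F" "a2 \<in> carrier F" using a aa by auto
  have pc: "perp_dot F a b \<in> carrier F" if "b \<in> E" for b
    using that E a12 aa by (auto simp: perp_dot_def)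
  have S: "{b\<in>E. perp_dot F a b \<notin> Units F} = {b\<in>E. a1 \<otimes> snd b = a2 \<otimes> fst b}"
  proof -
    have "perp_dot F a b \<notin> Units F \<longleftrightarrow> a1 \<otimes> snd b = a2 \<otimes> fst b" if b: "b \<in> E" for b
    proof -
      have b12: "fst b \<in> carrier F" "snd b \<in> carrier F" using b E by auto
      have "perp_dot F a b \<notin> Units F \<longleftrightarrow> perp_dot F a b = \<zero>" using pc[OF b] field_Units by auto
      also have "\<dots> \<longleftrightarrow> a1 \<otimes> snd b = a2 \<otimes> fst b"
        using minus_zero_eq[of "a1 \<otimes> snd b" "a2 \<otimes> fst b"] a12 b12 r_right_minus_eq
        by (auto simp: perp_dot_def aa)
      finally show ?thesis .
    qed
    then show ?thesis by auto
  qed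
  show ?thesis
  proof (cases "a1 = \<zero>")
    case True
    then have a2: "a2 \<noteq> \<zero>" using a aa by auto
    have "inj_on snd {b\<in>E. a1 \<otimes> snd b = a2 \<otimes> fst b}"
    proof (rule inj_onI)
      fix b c assume b: "b \<in> {b\<in>E. a1 \<otimes> snd b = a2 \<otimes> fst b}" and c: "c \<in> {b\<in>E. a1 \<otimes> snd b = a2 \<otimes> fst b}" and bc: "snd b = snd c"
      have z: "fst b = \<zero>" if b: "b \<in> {b\<in>E. a1 \<otimes> snd b = a2 \<otimes> fst b}" for b
      proof -
        have bc: "fst b \<in> carrier F" "snd b \<in> carrier F" using b E by auto
        have "a2 \<otimes> fst b = \<zero>" using b True bc by simp
        then show ?thesis using integral_iff[OF a12(2) bc(1)] a2 by simp
      qed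
      have "fst b = \<zero>" "fst c = \<zero>" using z[OF b] z[OF c] by auto
      then show "b = c" using bc by (simp add: prod_eq_iff)
    qed
    then have "card {b\<in>E. a1 \<otimes> snd b = a2 \<otimes> fst b} = card (snd ` {b\<in>E. a1 \<otimes> snd b = a2 \<otimes> fst b})"
      by (simp add: card_image)
    also have "\<dots> \<le> card (carrier F)" using E by (intro card_mono fin) auto
    finally show ?thesis using S by simp
  next
    case False
    have "inj_on fst {b\<in>E. a1 \<otimes> snd b = a2 \<otimes> fst b}"
    proof (rule inj_onI)
      fix b c assume b: "b \<in> {b\<in>E. a1 \<otimes> snd b = a2 \<otimes> fst b}" and c: "c \<in> {b\<in>E. a1 \<otimes> snd b = a2 \<otimes> fst b}" and bc: "fst b = fst c"
      have "a1 \<otimes> snd b = a1 \<otimes> snd c" using b c bc by simp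
      moreover have "snd b \<in> carrier F" "snd c \<in> carrier F" using b c E by auto
      ultimately have "snd b = snd c" using m_lcancel[OF False a12(1)] by blast
      then show "b = c" using bc by (simp add: prod_eq_iff)
    qed
    then have "card {b\<in>E. a1 \<otimes> snd b = a2 \<otimes> fst b} = card (fst ` {b\<in>E. a1 \<otimes> snd b = a2 \<otimes> fst b})"
      by (simp add: card_image)
    also have "\<dots> \<le> card (carrier F)" using E by (intro card_mono fin) auto
    finally show ?thesis using S by simp
  qed
qed

lemma field_bad:
  fixes F (structure)
  assumes fld: "field F" and fin: "finite (carrier F)"
    and E: "E \<subseteq> carrier F \<times> carrier F"
  shows "card (bad_tuples F k E) \<le> Suc k * card E * card (carrier F) ^ k"
proof -
  interpret field F by (rule fld)
  have finE: "finite E" using E fin by (meson finite_SigmaI finite_subset)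
  have q1: "1 \<le> card (carrier F)" using fin card_0_eq[OF fin] one_closed
    by (cases "card (carrier F)") auto
  have Zc: "card (E \<inter> {(\<zero>,\<zero>)}) \<le> card (carrier F)"
    using q1 card_mono[of "{(\<zero>,\<zero>)}" "E \<inter> {(\<zero>,\<zero>)}"] by auto
  show ?thesis unfolding bad_eq_relA
    by (rule relA_card[OF finE _ Zc]) (use E field_line_card[OF fld fin E] in auto)
qed

lemma res_perp_units:
  fixes p l :: nat
  assumes p: "Factorial_Ring.prime p" and l: "l \<ge> 1"
    and a: "a \<in> carrier (residue_ring (int p ^ l)) \<times> carrier (residue_ring (int p ^ l))"
    and b: "b \<in> carrier (residue_ring (int p ^ l)) \<times> carrier (residue_ring (int p ^ l))"
  shows "perp_dot (residue_ring (int p ^ l)) a b \<in> Units (residue_ring (int p ^ l))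
     \<longleftrightarrow> \<not> int p dvd (fst a * snd b - snd a * fst b)"
proof -
  define m where "m = int p ^ l"
  have p1: "int p > 1" using p prime_gt_1_nat by auto
  have m1: "m > 1" unfolding m_def using p1 l
    by (metis less_one not_less one_less_power zero_less_one_class.zero_le_one dual_order.strict_trans2 le_numeral_extra(2) linorder_not_le)
  interpret R: residues m "residue_ring m" by (simp add: residues_def m1)
  have pm: "int p dvd m" unfolding m_def using l by (simp add: dvd_power)
  define Xv where "Xv = fst a * snd b - snd a * fst b"
  define d where "d = perp_dot (residue_ring m) a b"
  have dX: "d = ((fst a * snd b) mod m + (- ((snd a * fst b) mod m)) mod m) mod m"
    unfolding d_def perp_dot_def by (simp add: R.minus_eq R.res_mult_eq R.res_add_eq R.res_neg_eq)
  have "[d = Xv] (mod m)" unfolding dX Xv_def cong_def by (simp add: mod_simps)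
  then have "[d = Xv] (mod int p)" using pm by (rule cong_dvd_modulus)
  then have dvdeq: "int p dvd d \<longleftrightarrow> int p dvd Xv" by (simp add: cong_dvd_iff)
  have d0: "0 \<le> d" "d < m" unfolding dX using m1 by auto
  have "d \<in> Units (residue_ring m) \<longleftrightarrow> 0 < d \<and> d < m \<and> coprime d m" by (simp add: R.res_units_eq)
  also have "\<dots> \<longleftrightarrow> \<not> int p dvd d"
  proof -
    have pi: "Factorial_Ring.prime (int p)" using p by simp
    have "coprime d m \<longleftrightarrow> coprime d (int p)" unfolding m_def using l by simp
    also have "\<dots> \<longleftrightarrow> \<not> int p dvd d"
    proof
      assume c: "coprime d (int p)"
      show "\<not> int p dvd d"
      proof
        assume "int p dvd d"
        then have "is_unit (int p)" using coprime_common_divisor[OF c] dvd_refl by blast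
        then show False using pi not_prime_unit by blast
      qed
    next
      assume "\<not> int p dvd d"
      then show "coprime d (int p)" using prime_imp_coprime[OF pi] coprime_commute by blast
    qed
    finally have c: "coprime d m \<longleftrightarrow> \<not> int p dvd d" .
    show ?thesis using c d0 by (cases "d = 0") auto
  qed
  finally show ?thesis using dvdeq unfolding d_def Xv_def m_def by simp
qed

lemma div_range:
  fixes P x :: int and l :: nat
  assumes "P > 1" "0 \<le> x" "x < P ^ l" "l \<ge> 1"
  shows "x div P \<in> {0..<P ^ (l - 1)}"
proof -
  have "P ^ l = P * P ^ (l - 1)" using assms(4) by (metis One_nat_def Suc_pred le_simps(3) power_Suc)
  then have "x < P * P ^ (l - 1)" using assms by simp
  moreover have "x = P * (x div P) + x mod P" by simp
  moreover have "0 \<le> x mod P" using assms(1) by simp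
  ultimately have "x div P < P ^ (l - 1)"
  proof -
    assume h: "x < P * P ^ (l - 1)" "x = P * (x div P) + x mod P" "0 \<le> x mod P"
    show ?thesis
    proof (rule ccontr)
      assume "\<not> x div P < P ^ (l - 1)"
      then have "P * P ^ (l - 1) \<le> P * (x div P)" using assms(1) by (intro mult_left_mono) auto
      then show False using h by linarith
    qed
  qed
  moreover have "0 \<le> x div P" using assms by (simp add: pos_imp_zdiv_nonneg_iff)
  ultimately show ?thesis by simp
qed

lemma card_int_range: "card {0..<(int p) ^ n} = p ^ n"
  by (simp flip: of_nat_power)

lemma card_Zpart:
  fixes p l :: nat
  assumes p: "p > 1" and l: "l \<ge> 1"
  shows "card (({0..<int p ^ l} \<times> {0..<int p ^ l}) \<inter> {a. int p dvd fst a \<and> int p dvd snd a}) \<le> p ^ (2 * l - 1)"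
proof -
  let ?A = "({0..<int p ^ l} \<times> {0..<int p ^ l}) \<inter> {a. int p dvd fst a \<and> int p dvd snd a}"
  let ?f = "\<lambda>a::int\<times>int. (fst a div int p, snd a div int p)"
  have inj: "inj_on ?f ?A"
  proof (rule inj_onI)
    fix a b assume a: "a \<in> ?A" and b: "b \<in> ?A" and e: "?f a = ?f b"
    have "fst a = int p * (fst a div int p)" "snd a = int p * (snd a div int p)"
         "fst b = int p * (fst b div int p)" "snd b = int p * (snd b div int p)"
      using a b by auto
    then show "a = b" using e by (simp add: prod_eq_iff)
  qed
  have sub: "?f ` ?A \<subseteq> {0..<int p ^ (l - 1)} \<times> {0..<int p ^ (l - 1)}"
  proof
    fix y assume "y \<in> ?f ` ?A"
    then obtain b where b: "b \<in> ?A" and y: "y = ?f b" by blast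
    have "fst b div int p \<in> {0..<int p ^ (l - 1)}" "snd b div int p \<in> {0..<int p ^ (l - 1)}"
      using b p l by (intro div_range; auto)+
    then show "y \<in> {0..<int p ^ (l - 1)} \<times> {0..<int p ^ (l - 1)}" using y by auto
  qed
  have "card ?A = card (?f ` ?A)" using inj by (simp add: card_image)
  also have "\<dots> \<le> card ({0..<int p ^ (l - 1)} \<times> {0..<int p ^ (l - 1)})"
    by (rule card_mono[OF _ sub]) auto
  also have "\<dots> = p ^ (l - 1) * p ^ (l - 1)" by (simp only: card_cartesian_product card_int_range)
  also have "\<dots> = p ^ (2 * l - 2)"
  proof -
    have e2: "2 * l - 2 = (l - 1) + (l - 1)" by simp
    show ?thesis by (simp only: e2 power_add)
  qed
  also have "\<dots> \<le> p ^ (2 * l - 1)" using p by (intro power_increasing) auto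
  finally show ?thesis .
qed

lemma card_linepart:
  fixes p l :: nat
  assumes p: "Factorial_Ring.prime p" and l: "l \<ge> 1"
    and a: "\<not> (int p dvd fst a \<and> int p dvd snd a)"
  shows "card {b \<in> {0..<int p ^ l} \<times> {0..<int p ^ l}. int p dvd (fst a * snd b - snd a * fst b)} \<le> p ^ (2 * l - 1)"
proof -
  have p1: "p > 1" using p prime_gt_1_nat by auto
  have pi: "Factorial_Ring.prime (int p)" using p by simp
  let ?A = "{b \<in> {0..<int p ^ l} \<times> {0..<int p ^ l}. int p dvd (fst a * snd b - snd a * fst b)}"
  have cT: "card ({0..<int p ^ l} \<times> {0..<int p ^ (l - 1)}) = p ^ (2 * l - 1)"
    "card ({0..<int p ^ (l - 1)} \<times> {0..<int p ^ l}) = p ^ (2 * l - 1)"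
  proof -
    have e: "2 * l - 1 = l + (l - 1)" using l by simp
    have "p ^ l * p ^ (l - 1) = p ^ (2 * l - 1)" by (simp only: e power_add)
    then show "card ({0..<int p ^ l} \<times> {0..<int p ^ (l - 1)}) = p ^ (2 * l - 1)"
      "card ({0..<int p ^ (l - 1)} \<times> {0..<int p ^ l}) = p ^ (2 * l - 1)"
      by (simp_all only: card_cartesian_product card_int_range mult.commute)
  qed
  have modeq: "x = y" if "x div int p = y div int p" "int p dvd (x - y)" for x y :: int
  proof -
    have m: "x mod int p = y mod int p" using that(2) by (simp add: mod_eq_dvd_iff)
    have "x = x div int p * int p + x mod int p" "y = y div int p * int p + y mod int p" by simp_all
    then show ?thesis using m that(1) by metis
  qed
  show ?thesis
  proof (cases "int p dvd fst a")
    case False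
    let ?f = "\<lambda>b::int\<times>int. (fst b, snd b div int p)"
    have inj: "inj_on ?f ?A"
    proof (rule inj_onI)
      fix b c assume b: "b \<in> ?A" and c: "c \<in> ?A" and e: "?f b = ?f c"
      have db: "int p dvd (fst a * snd b - snd a * fst b)" using b by simp
      have dc: "int p dvd (fst a * snd c - snd a * fst c)" using c by simp
      have "int p dvd (fst a * snd b - snd a * fst b) - (fst a * snd c - snd a * fst c)"
        by (rule dvd_diff[OF db dc])
      moreover have "(fst a * snd b - snd a * fst b) - (fst a * snd c - snd a * fst c) = fst a * (snd b - snd c)"
        using e by (simp add: algebra_simps)
      ultimately have "int p dvd fst a * (snd b - snd c)" by simp
      then have "int p dvd (snd b - snd c)" using False pi prime_dvd_mult_iff by blast
      moreover have "snd b div int p = snd c div int p" using e by simp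
      ultimately have "snd b = snd c" using modeq by blast
      then show "b = c" using e by (simp add: prod_eq_iff)
    qed
    have sub: "?f ` ?A \<subseteq> {0..<int p ^ l} \<times> {0..<int p ^ (l - 1)}"
    proof
      fix y assume "y \<in> ?f ` ?A"
      then obtain b where b: "b \<in> ?A" and y: "y = ?f b" by blast
      have "snd b div int p \<in> {0..<int p ^ (l - 1)}" using b p1 l by (intro div_range) auto
      then show "y \<in> {0..<int p ^ l} \<times> {0..<int p ^ (l - 1)}" using b y by auto
    qed
    have "card ?A = card (?f ` ?A)" using inj by (simp add: card_image)
    also have "\<dots> \<le> card ({0..<int p ^ l} \<times> {0..<int p ^ (l - 1)})"
      by (rule card_mono[OF _ sub]) auto
    finally show ?thesis using cT by simp
  next
    case True
    then have F: "\<not> int p dvd snd a" using a by blast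
    let ?f = "\<lambda>b::int\<times>int. (fst b div int p, snd b)"
    have inj: "inj_on ?f ?A"
    proof (rule inj_onI)
      fix b c assume b: "b \<in> ?A" and c: "c \<in> ?A" and e: "?f b = ?f c"
      have db: "int p dvd (fst a * snd b - snd a * fst b)" using b by simp
      have dc: "int p dvd (fst a * snd c - snd a * fst c)" using c by simp
      have "int p dvd (fst a * snd b - snd a * fst b) - (fst a * snd c - snd a * fst c)"
        by (rule dvd_diff[OF db dc])
      moreover have "(fst a * snd b - snd a * fst b) - (fst a * snd c - snd a * fst c) = - (snd a * (fst b - fst c))"
        using e by (simp add: algebra_simps)
      ultimately have "int p dvd snd a * (fst b - fst c)" by (metis dvd_minus_iff)
      then have "int p dvd (fst b - fst c)" using F pi prime_dvd_mult_iff by blast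
      moreover have "fst b div int p = fst c div int p" using e by simp
      ultimately have "fst b = fst c" using modeq by blast
      then show "b = c" using e by (simp add: prod_eq_iff)
    qed
    have sub: "?f ` ?A \<subseteq> {0..<int p ^ (l - 1)} \<times> {0..<int p ^ l}"
    proof
      fix y assume "y \<in> ?f ` ?A"
      then obtain b where b: "b \<in> ?A" and y: "y = ?f b" by blast
      have "fst b div int p \<in> {0..<int p ^ (l - 1)}" using b p1 l by (intro div_range) auto
      then show "y \<in> {0..<int p ^ (l - 1)} \<times> {0..<int p ^ l}" using b y by auto
    qed
    have "card ?A = card (?f ` ?A)" using inj by (simp add: card_image)
    also have "\<dots> \<le> card ({0..<int p ^ (l - 1)} \<times> {0..<int p ^ l})"
      by (rule card_mono[OF _ sub]) auto
    finally show ?thesis using cT by simp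
  qed
qed

lemma res_carrier_int: "carrier (residue_ring m) = {0..<m}"
  by (auto simp: residue_ring_def)

lemma res_bad:
  fixes p l :: nat
  assumes p: "Factorial_Ring.prime p" and l: "l \<ge> 1"
  shows "card (bad_tuples (residue_ring (int p ^ l)) k
           (carrier (residue_ring (int p ^ l)) \<times> carrier (residue_ring (int p ^ l))))
         \<le> Suc k * p ^ ((2 * l - 1) * (k + 1) + 1)"
proof -
  let ?R = "residue_ring (int p ^ l)"
  let ?S = "{0..<int p ^ l} \<times> {0..<int p ^ l}"
  let ?Z = "{a. int p dvd fst a \<and> int p dvd snd a}"
  have p1: "p > 1" using p prime_gt_1_nat by auto
  have car: "carrier ?R \<times> carrier ?R = ?S" by (simp add: res_carrier_int)
  have L: "card {b\<in>?S. perp_dot ?R a b \<notin> Units ?R} \<le> p ^ (2 * l - 1)" if a: "a \<in> ?S" "a \<notin> ?Z" for a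
  proof -
    have "{b\<in>?S. perp_dot ?R a b \<notin> Units ?R} = {b \<in> ?S. int p dvd (fst a * snd b - snd a * fst b)}"
      using res_perp_units[OF p l] a car by auto
    then show ?thesis using card_linepart[OF p l, of a] a by simp
  qed
  have Zc: "card (?S \<inter> ?Z) \<le> p ^ (2 * l - 1)" using card_Zpart[OF p1 l] by simp
  have "card (bad_tuples ?R k (carrier ?R \<times> carrier ?R)) \<le> Suc k * card ?S * (p ^ (2 * l - 1)) ^ k"
    unfolding car bad_eq_relA by (rule relA_card[OF _ L Zc]) auto
  also have "card ?S = p ^ l * p ^ l" by (simp only: card_cartesian_product card_int_range)
  also have "Suc k * (p ^ l * p ^ l) * (p ^ (2 * l - 1)) ^ k = Suc k * p ^ ((2 * l - 1) * (k + 1) + 1)"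
  proof -
    have e: "(2 * l - 1) * (k + 1) + 1 = l + l + (2 * l - 1) * k" using l by (cases l) (auto simp: algebra_simps)
    show ?thesis by (simp only: e power_add power_mult mult.assoc)
  qed
  finally show ?thesis .
qed

lemma bad_mono: "E \<subseteq> S \<Longrightarrow> bad_tuples R k E \<subseteq> bad_tuples R k S"
  unfolding bad_tuples_def by (auto simp: PiE_def Pi_def)

lemma big_powr:
  fixes M \<epsilon> :: real and y :: nat
  assumes "\<epsilon> > 0" "M > 0" "y \<ge> nat \<lceil>M powr (1 / \<epsilon>)\<rceil> + 1"
  shows "real y powr \<epsilon> \<ge> M" "real y \<ge> 1"
proof -
  have "real y \<ge> M powr (1 / \<epsilon>)" using assms(3)
    by (smt (verit, ccfv_SIG) le_nat_iff of_nat_1 of_nat_add of_nat_le_iff real_nat_ceiling_ge)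
  then have "real y powr \<epsilon> \<ge> (M powr (1 / \<epsilon>)) powr \<epsilon>" using assms(1) by (intro powr_mono2) auto
  also have "(M powr (1 / \<epsilon>)) powr \<epsilon> = M" using assms(1,2) by (simp add: powr_powr)
  finally show "real y powr \<epsilon> \<ge> M" .
  show "real y \<ge> 1" using assms(3) by simp
qed

lemma part1: "\<exists>C::real. \<forall>(F :: nat ring) E.
        field F \<longrightarrow> finite (carrier F) \<longrightarrow> E \<subseteq> carrier F \<times> carrier F \<longrightarrow>
        real (card (bad_tuples F k E)) \<le> C * real (card (carrier F)) ^ k * real (card E)"
proof (intro exI allI impI)
  fix F :: "nat ring" and E
  assume "field F" "finite (carrier F)" "E \<subseteq> carrier F \<times> carrier F"
  then have "card (bad_tuples F k E) \<le> Suc k * card E * card (carrier F) ^ k" by (rule field_bad)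
  then have "real (card (bad_tuples F k E)) \<le> real (Suc k * card E * card (carrier F) ^ k)" by linarith
  then show "real (card (bad_tuples F k E)) \<le> real (Suc k) * real (card (carrier F)) ^ k * real (card E)"
    by (simp add: algebra_simps)
qed

lemma part2:
  assumes k: "k \<ge> 1"
  shows "\<forall>\<epsilon>::real. \<forall>c::real. \<forall>\<delta>::real. \<epsilon> > 0 \<longrightarrow> c > 0 \<longrightarrow> \<delta> > 0 \<longrightarrow>
        (\<exists>Q::nat. \<forall>(F :: nat ring) E.
          field F \<longrightarrow> finite (carrier F) \<longrightarrow> card (carrier F) \<ge> Q \<longrightarrow>
          E \<subseteq> carrier F \<times> carrier F \<longrightarrow>
          real (card E) \<ge> c * real (card (carrier F)) powr (1 + \<epsilon>) \<longrightarrow>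
          real (card (bad_tuples F k E)) \<le> \<delta> * real (card E) ^ (k + 1))"
proof (intro allI impI)
  fix \<epsilon> c \<delta> :: real assume ep: "\<epsilon> > 0" and c: "c > 0" and d: "\<delta> > 0"
  define M where "M = real (Suc k) / (\<delta> * c ^ k)"
  have M: "M > 0" using c d by (simp add: M_def)
  show "\<exists>Q::nat. \<forall>(F :: nat ring) E.
          field F \<longrightarrow> finite (carrier F) \<longrightarrow> card (carrier F) \<ge> Q \<longrightarrow>
          E \<subseteq> carrier F \<times> carrier F \<longrightarrow>
          real (card E) \<ge> c * real (card (carrier F)) powr (1 + \<epsilon>) \<longrightarrow>
          real (card (bad_tuples F k E)) \<le> \<delta> * real (card E) ^ (k + 1)"
  proof (intro exI allI impI)
    fix F :: "nat ring" and E
    assume fF: "field F" and fin: "finite (carrier F)" and Q: "card (carrier F) \<ge> nat \<lceil>M powr (1 / \<epsilon>)\<rceil> + 1"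
      and E: "E \<subseteq> carrier F \<times> carrier F" and big: "real (card E) \<ge> c * real (card (carrier F)) powr (1 + \<epsilon>)"
    define y where "y = real (card (carrier F))"
    define x where "x = real (card E)"
    have yM: "y powr \<epsilon> \<ge> M" and y1: "y \<ge> 1" using big_powr[OF ep M Q] by (simp_all add: y_def)
    have ye1: "y powr \<epsilon> \<ge> 1" using y1 ep by (simp add: ge_one_powr_ge_zero)
    have "card (bad_tuples F k E) \<le> Suc k * card E * card (carrier F) ^ k" by (rule field_bad[OF fF fin E])
    then have b: "real (card (bad_tuples F k E)) \<le> real (Suc k) * y ^ k * x"
      unfolding x_def y_def by (simp add: algebra_simps flip: of_nat_mult of_nat_power)
    have xb: "x \<ge> c * (y * y powr \<epsilon>)" using big y1 unfolding x_def y_def[symmetric]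
      by (simp add: powr_add)
    have x0: "x \<ge> 0" by (simp add: x_def)
    have "c ^ k * y ^ k * M \<le> c ^ k * y ^ k * (y powr \<epsilon>) ^ k"
    proof -
      have "(y powr \<epsilon>) ^ k \<ge> y powr \<epsilon>" using ye1 k by (metis power_increasing power_one_right)
      then show ?thesis using yM c y1 by (intro mult_left_mono) auto
    qed
    also have "\<dots> = (c * (y * y powr \<epsilon>)) ^ k" by (simp add: power_mult_distrib)
    also have "\<dots> \<le> x ^ k" using xb c y1 by (intro power_mono) auto
    finally have xk: "x ^ k \<ge> c ^ k * y ^ k * M" .
    have "real (Suc k) * y ^ k = \<delta> * (c ^ k * y ^ k * M)" using c d by (simp add: M_def field_simps)
    also have "\<dots> \<le> \<delta> * x ^ k" using xk d by simp
    finally have "real (Suc k) * y ^ k * x \<le> \<delta> * x ^ k * x" using x0 by (intro mult_right_mono) auto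
    then show "real (card (bad_tuples F k E)) \<le> \<delta> * real (card E) ^ (k + 1)"
      using b unfolding x_def by (simp add: algebra_simps)
  qed
qed

lemma part3: "\<exists>C::real. \<forall>(p::nat) (l::nat).
        Factorial_Ring.prime p \<longrightarrow> l \<ge> 1 \<longrightarrow>
        (let R = residue_ring (int p ^ l) in
          real (card (bad_tuples R k (carrier R \<times> carrier R)))
            \<le> C * real p ^ ((2 * l - 1) * (k + 1) + 1))"
proof (intro exI allI impI)
  fix p l :: nat assume p: "Factorial_Ring.prime p" and l: "l \<ge> 1"
  have "real (card (bad_tuples (residue_ring (int p ^ l)) k
           (carrier (residue_ring (int p ^ l)) \<times> carrier (residue_ring (int p ^ l)))))
         \<le> real (Suc k * p ^ ((2 * l - 1) * (k + 1) + 1))"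
    using res_bad[OF p l, of k] by linarith
  then show "let R = residue_ring (int p ^ l) in
          real (card (bad_tuples R k (carrier R \<times> carrier R)))
            \<le> real (Suc k) * real p ^ ((2 * l - 1) * (k + 1) + 1)"
    unfolding Let_def of_nat_mult of_nat_power .
qed

lemma part4:
  shows "\<forall>\<epsilon>::real. \<forall>c::real. \<forall>\<delta>::real. \<epsilon> > 0 \<longrightarrow> c > 0 \<longrightarrow> \<delta> > 0 \<longrightarrow>
        (\<exists>P::nat. \<forall>(p::nat) (l::nat) E.
          Factorial_Ring.prime p \<longrightarrow> l \<ge> 1 \<longrightarrow> p \<ge> P \<longrightarrow>
          (let R = residue_ring (int p ^ l) in
            E \<subseteq> carrier R \<times> carrier R \<longrightarrow>
            real (card E) \<ge> c * real p powr (2 * real l - 1 + 1 / (real k + 1) + \<epsilon>) \<longrightarrow>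
            real (card (bad_tuples R k E)) \<le> \<delta> * real (card E) ^ (k + 1)))"
proof (intro allI impI)
  fix \<epsilon> c \<delta> :: real assume ep: "\<epsilon> > 0" and c: "c > 0" and d: "\<delta> > 0"
  define M where "M = real (Suc k) / (\<delta> * c ^ (k + 1))"
  have M: "M > 0" using c d by (simp add: M_def)
  show "\<exists>P::nat. \<forall>(p::nat) (l::nat) E.
          Factorial_Ring.prime p \<longrightarrow> l \<ge> 1 \<longrightarrow> p \<ge> P \<longrightarrow>
          (let R = residue_ring (int p ^ l) in
            E \<subseteq> carrier R \<times> carrier R \<longrightarrow>
            real (card E) \<ge> c * real p powr (2 * real l - 1 + 1 / (real k + 1) + \<epsilon>) \<longrightarrow>
            real (card (bad_tuples R k E)) \<le> \<delta> * real (card E) ^ (k + 1))"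
  proof (intro exI allI impI, unfold Let_def, intro impI)
    fix p l :: nat and E
    assume p: "Factorial_Ring.prime p" and l: "l \<ge> 1" and P: "p \<ge> nat \<lceil>M powr (1 / \<epsilon>)\<rceil> + 1"
      and E: "E \<subseteq> carrier (residue_ring (int p ^ l)) \<times> carrier (residue_ring (int p ^ l))"
      and big: "real (card E) \<ge> c * real p powr (2 * real l - 1 + 1 / (real k + 1) + \<epsilon>)"
    define N where "N = (2 * l - 1) * (k + 1) + 1"
    define y where "y = real p"
    define x where "x = real (card E)"
    let ?R = "residue_ring (int p ^ l)"
    have yM: "y powr \<epsilon> \<ge> M" and y1: "y \<ge> 1" using big_powr[OF ep M P] by (simp_all add: y_def)
    have fin: "finite (carrier ?R \<times> carrier ?R)" by (simp add: res_carrier_int)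
    have "card (bad_tuples ?R k E) \<le> card (bad_tuples ?R k (carrier ?R \<times> carrier ?R))"
      by (rule card_mono[OF _ bad_mono[OF E]]) (simp add: bad_eq_relA relA_finite[OF fin])
    also have "\<dots> \<le> Suc k * p ^ N" unfolding N_def by (rule res_bad[OF p l])
    finally have "real (card (bad_tuples ?R k E)) \<le> real (Suc k * p ^ N)" by linarith
    then have b: "real (card (bad_tuples ?R k E)) \<le> real (Suc k) * y ^ N"
      unfolding y_def of_nat_mult of_nat_power .
    define e where "e = 2 * real l - 1 + 1 / (real k + 1) + \<epsilon>"
    have eN: "e * real (k + 1) = real N + \<epsilon> * real (k + 1)"
      using l unfolding e_def N_def by (simp add: of_nat_diff field_simps)
    have ye: "(y powr e) ^ (k + 1) = y ^ N * y powr (\<epsilon> * real (k + 1))"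
    proof -
      have "(y powr e) ^ (k + 1) = (y powr e) powr real (k + 1)" using y1
        by (intro powr_realpow[symmetric]) simp
      also have "\<dots> = y powr (e * real (k + 1))" by (simp only: powr_powr)
      also have "\<dots> = y powr real N * y powr (\<epsilon> * real (k + 1))" by (simp only: eN powr_add)
      also have "y powr real N = y ^ N" using y1 by (simp add: powr_realpow)
      finally show ?thesis .
    qed
    have "y powr (\<epsilon> * real (k + 1)) \<ge> y powr \<epsilon>" using y1 ep by (intro powr_mono) auto
    then have ym2: "y powr (\<epsilon> * real (k + 1)) \<ge> M" using yM by linarith
    have "real (Suc k) * y ^ N = \<delta> * (c ^ (k + 1) * y ^ N * M)" using c d by (simp add: M_def field_simps)
    also have "\<dots> \<le> \<delta> * (c ^ (k + 1) * (y powr e) ^ (k + 1))"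
      unfolding ye using ym2 c d y1 by (intro mult_left_mono) (auto simp: mult.assoc intro!: mult_left_mono)
    also have "\<dots> = \<delta> * (c * y powr e) ^ (k + 1)" by (simp add: power_mult_distrib)
    also have "\<dots> \<le> \<delta> * x ^ (k + 1)"
      using big c d unfolding x_def y_def e_def by (intro mult_left_mono power_mono) auto
    finally show "real (card (bad_tuples ?R k E)) \<le> \<delta> * real (card E) ^ (k + 1)"
      using b unfolding x_def by linarith
  qed
qed

theorem lemma2p5:
  fixes k :: nat
  assumes "k \<ge> 1"
  shows
    \<comment> \<open>(i) finite fields F_q (modelled as finite HOL-Algebra fields with carrier in nat)\<close>
    "(\<exists>C::real. \<forall>(F :: nat ring) E.
        field F \<longrightarrow> finite (carrier F) \<longrightarrow> E \<subseteq> carrier F \<times> carrier F \<longrightarrow>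
        real (card (bad_tuples F k E)) \<le> C * real (card (carrier F)) ^ k * real (card E))
   \<and> (\<forall>\<epsilon>::real. \<forall>c::real. \<forall>\<delta>::real. \<epsilon> > 0 \<longrightarrow> c > 0 \<longrightarrow> \<delta> > 0 \<longrightarrow>
        (\<exists>Q::nat. \<forall>(F :: nat ring) E.
          field F \<longrightarrow> finite (carrier F) \<longrightarrow> card (carrier F) \<ge> Q \<longrightarrow>
          E \<subseteq> carrier F \<times> carrier F \<longrightarrow>
          real (card E) \<ge> c * real (card (carrier F)) powr (1 + \<epsilon>) \<longrightarrow>
          real (card (bad_tuples F k E)) \<le> \<delta> * real (card E) ^ (k + 1)))
   \<and> \<comment> \<open>(ii) R = Z/p^l Z\<close>
     (\<exists>C::real. \<forall>(p::nat) (l::nat).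
        Factorial_Ring.prime p \<longrightarrow> l \<ge> 1 \<longrightarrow>
        (let R = residue_ring (int p ^ l) in
          real (card (bad_tuples R k (carrier R \<times> carrier R)))
            \<le> C * real p ^ ((2 * l - 1) * (k + 1) + 1)))
   \<and> (\<forall>\<epsilon>::real. \<forall>c::real. \<forall>\<delta>::real. \<epsilon> > 0 \<longrightarrow> c > 0 \<longrightarrow> \<delta> > 0 \<longrightarrow>
        (\<exists>P::nat. \<forall>(p::nat) (l::nat) E.
          Factorial_Ring.prime p \<longrightarrow> l \<ge> 1 \<longrightarrow> p \<ge> P \<longrightarrow>
          (let R = residue_ring (int p ^ l) in
            E \<subseteq> carrier R \<times> carrier R \<longrightarrow>
            real (card E) \<ge> c * real p powr (2 * real l - 1 + 1 / (real k + 1) + \<epsilon>) \<longrightarrow>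
            real (card (bad_tuples R k E)) \<le> \<delta> * real (card E) ^ (k + 1))))"
  using part1[of k] part2[OF assms] part3[of k] part4[of k] by blast

end
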